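(* Let $u_1>0$, $u_2>0$ with $U:=u_1+u_2<1$, let $0<q<1$, and let $n\in\mathbf N$. Let $(\Omega_n,p)$ be the probability space described in the context, and for $i_0,i_1,i_2\in\mathbf N_0$ with $i_0+i_1+i_2=n$ let $A(n;i_0,i_1,i_2)\subset\Omega_n$ be the set of sequences in which the symbols $0,1,2$ occur exactly $i_0,i_1,i_2$ times respectively. Then $$P\big(A(n;i_0,i_1,i_2)\big)=\sum_{\omega\in A(n;i_0,i_1,i_2)}p(\omega)=u_1^{i_1}u_2^{i_2}(U;q)_{i_0}\begin{bmatrix}n\\ i_0,i_1,i_2\end{bmatrix}_q .$$
   Context: For $j\in\mathbf N$, $(x;q)_j=(1-x)(1-qx)\cdots(1-q^{j-1}x)$, $(x;q)_0=1$, $(q)_j=(q;q)_j$, and for $i_0+i_1+i_2=n$ the $q$-polynomial coefficient is $\begin{bmatrix}n\\ i_0,i_1,i_2\end{bmatrix}_q=\frac{(q)_n}{(q)_{i_0}(q)_{i_1}(q)_{i_2}}$. The sample space $\Omega_n$ consists of all sequences $(\varepsilon_1,\dots,\varepsilon_n)$ with $\varepsilon_j\in\{0,1,2,\ast\}$ such that if $\varepsilon_k=\ast$ then $\varepsilon_l=\ast$ for all $l>k$. Put $p((\varepsilon_1,\dots,\varepsilon_n))=f_1\cdots f_n$ where $f_1=1-U,u_1,u_2,0$ according as $\varepsilon_1=0,1,2,\ast$; for $1\le m\le n-1$, if $\varepsilon_m=\ast$ then $f_{m+1}=1$, and if $\varepsilon_1,\dots,\varepsilon_m\in\{0,1,2\}$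 contain $i_0$ zeros, $i_1$ ones and $i_2$ twos, then $f_{m+1}=1-q^{i_0}U$, $q^{i_0}u_1$, $q^{i_0+i_1}u_2$, $q^{i_0}u_2(1-q^{i_1})$ according as $\varepsilon_{m+1}=0,1,2,\ast$. *)

theory Defs
  imports Main "HOL-Library.FuncSet" Complex_Main
begin

text \<open>Symbols 0, 1, 2 and the absorbing symbol (written Star).\<close>
datatype sym = S0 | S1 | S2 | Star

definition qpoch :: "real \<Rightarrow> real \<Rightarrow> nat \<Rightarrow> real" where
  "qpoch x q j = (\<Prod>i<j. 1 - q ^ i * x)"

definition qfact :: "real \<Rightarrow> nat \<Rightarrow> real" where
  "qfact q j = qpoch q q j"

definition qmultinom :: "real \<Rightarrow> nat \<Rightarrow> nat \<Rightarrow> nat \<Rightarrow> real" where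
  "qmultinom q i0 i1 i2 =
     qfact q (i0 + i1 + i2) / (qfact q i0 * qfact q i1 * qfact q i2)"

definition cnt :: "sym \<Rightarrow> sym list \<Rightarrow> nat" where
  "cnt s xs = length (filter (\<lambda>y. y = s) xs)"

definition Omega :: "nat \<Rightarrow> sym list set" where
  "Omega n = {xs. length xs = n \<and>
      (\<forall>k l. k < l \<and> l < n \<and> xs ! k = Star \<longrightarrow> xs ! l = Star)}"

definition fac :: "real \<Rightarrow> real \<Rightarrow> real \<Rightarrow> sym list \<Rightarrow> sym \<Rightarrow> real" where
  "fac u1 u2 q pre e =
     (if pre \<noteq> [] \<and> last pre = Star then 1
      else (let i0 = cnt S0 pre; i1 = cnt S1 pre; U = u1 + u2 in
        (case e of
           S0 \<Rightarrow> 1 - q ^ i0 * U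
         | S1 \<Rightarrow> q ^ i0 * u1
         | S2 \<Rightarrow> q ^ (i0 + i1) * u2
         | Star \<Rightarrow> q ^ i0 * u2 * (1 - q ^ i1))))"

definition pr :: "real \<Rightarrow> real \<Rightarrow> real \<Rightarrow> sym list \<Rightarrow> real" where
  "pr u1 u2 q xs = (\<Prod>m<length xs. fac u1 u2 q (take m xs) (xs ! m))"

definition Aev :: "nat \<Rightarrow> nat \<Rightarrow> nat \<Rightarrow> nat \<Rightarrow> sym list set" where
  "Aev n i0 i1 i2 = {xs \<in> Omega n. cnt S0 xs = i0 \<and> cnt S1 xs = i1 \<and> cnt S2 xs = i2}"

end

theory Submission
  imports Defs
begin

lemma cnt_simps[simp]: "cnt s [] = 0" "cnt s (x#xs) = (if x = s then 1 else 0) + cnt s xs"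
  "cnt s (xs@ys) = cnt s xs + cnt s ys" by (simp_all add: cnt_def)

lemma len_cnt: "length xs = cnt S0 xs + cnt S1 xs + cnt S2 xs + cnt Star xs"
  apply (induction xs) apply simp apply (case_tac a) apply auto done

lemma cnt_Star0: "cnt Star xs = 0 \<longleftrightarrow> Star \<notin> set xs"
  by (induction xs) auto

lemma pr_snoc: "pr u1 u2 q (w@[e]) = pr u1 u2 q w * fac u1 u2 q w e"
proof -
  have "pr u1 u2 q (w@[e]) = (\<Prod>m<length w. fac u1 u2 q (take m (w@[e])) ((w@[e]) ! m)) * fac u1 u2 q w e"
    unfolding pr_def by (simp add: nth_append)
  also have "(\<Prod>m<length w. fac u1 u2 q (take m (w@[e])) ((w@[e]) ! m)) = pr u1 u2 q w"
    unfolding pr_def by (intro prod.cong) (auto simp: nth_append)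
  finally show ?thesis .
qed

lemma fac_noStar:
  assumes "Star \<notin> set w"
  shows "fac u1 u2 q w S0 = 1 - q ^ cnt S0 w * (u1+u2)"
    "fac u1 u2 q w S1 = q ^ cnt S0 w * u1"
    "fac u1 u2 q w S2 = q ^ (cnt S0 w + cnt S1 w) * u2"
proof -
  have l: "(if w \<noteq> [] \<and> last w = Star then (1::real) else x) = x" for x
  proof (cases "w = []")
    case False
    then have "last w \<in> set w" by simp
    then have "last w \<noteq> Star" using assms by auto
    then show ?thesis by simp
  qed simp
  show "fac u1 u2 q w S0 = 1 - q ^ cnt S0 w * (u1+u2)"
    "fac u1 u2 q w S1 = q ^ cnt S0 w * u1"
    "fac u1 u2 q w S2 = q ^ (cnt S0 w + cnt S1 w) * u2"
    unfolding fac_def l by (simp_all add: Let_def)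
qed

lemma noStar: "set w \<subseteq> {S0,S1,S2} \<Longrightarrow> Star \<notin> set w" by auto

definition Wset :: "nat \<Rightarrow> nat \<Rightarrow> nat \<Rightarrow> nat \<Rightarrow> sym list set" where
  "Wset n i0 i1 i2 = {xs. length xs = n \<and> set xs \<subseteq> {S0,S1,S2} \<and>
      cnt S0 xs = i0 \<and> cnt S1 xs = i1 \<and> cnt S2 xs = i2}"

lemma Wset_finite: "finite (Wset n i0 i1 i2)"
proof -
  have "Wset n i0 i1 i2 \<subseteq> {xs. set xs \<subseteq> {S0,S1,S2} \<and> length xs = n}"
    unfolding Wset_def by auto
  moreover have "finite {xs. set xs \<subseteq> {S0,S1,S2} \<and> length xs = n}"
    by (rule finite_lists_length_eq) simp
  ultimately show ?thesis by (rule finite_subset)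
qed

lemma Aev_eq:
  assumes "i0 + i1 + i2 = n"
  shows "Aev n i0 i1 i2 = Wset n i0 i1 i2"
proof (intro set_eqI iffI)
  fix xs assume "xs \<in> Aev n i0 i1 i2"
  then have h: "length xs = n" "cnt S0 xs = i0" "cnt S1 xs = i1" "cnt S2 xs = i2"
    unfolding Aev_def Omega_def by auto
  then have "cnt Star xs = 0" using len_cnt[of xs] assms by simp
  then have "Star \<notin> set xs" using cnt_Star0 by blast
  have "set xs \<subseteq> {S0,S1,S2}"
  proof
    fix x assume "x \<in> set xs"
    then have "x \<noteq> Star" using \<open>Star \<notin> set xs\<close> by auto
    then show "x \<in> {S0,S1,S2}" by (cases x) auto
  qed
  then show "xs \<in> Wset n i0 i1 i2" using h unfolding Wset_def by auto
next
  fix xs assume "xs \<in> Wset n i0 i1 i2"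
  then have h: "length xs = n" "cnt S0 xs = i0" "cnt S1 xs = i1" "cnt S2 xs = i2"
     "set xs \<subseteq> {S0,S1,S2}"
    unfolding Wset_def by auto
  have "xs ! k \<noteq> Star" if "k < n" for k
  proof -
    have "xs ! k \<in> set xs" using that h(1) by simp
    then show ?thesis using h(5) by auto
  qed
  then show "xs \<in> Aev n i0 i1 i2" using h unfolding Aev_def Omega_def by auto
qed

definition Bset :: "sym \<Rightarrow> nat \<Rightarrow> nat \<Rightarrow> nat \<Rightarrow> nat \<Rightarrow> sym list set" where
  "Bset e n i0 i1 i2 = {w. length w = n \<and> set w \<subseteq> {S0,S1,S2} \<and>
      cnt S0 (w@[e]) = i0 \<and> cnt S1 (w@[e]) = i1 \<and> cnt S2 (w@[e]) = i2}"

lemma Wset_Suc: "Wset (Suc n) i0 i1 i2 = (\<lambda>w. w@[S0]) ` Bset S0 n i0 i1 i2 \<union>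
   (\<lambda>w. w@[S1]) ` Bset S1 n i0 i1 i2 \<union> (\<lambda>w. w@[S2]) ` Bset S2 n i0 i1 i2"
  (is "_ = ?A \<union> ?B \<union> ?C")
proof (intro set_eqI iffI)
  fix xs assume a: "xs \<in> Wset (Suc n) i0 i1 i2"
  then have "xs \<noteq> []" unfolding Wset_def by auto
  then obtain w e where xs: "xs = w @ [e]" by (cases xs rule: rev_cases) auto
  have E: "e = S0 \<or> e = S1 \<or> e = S2" using a xs unfolding Wset_def by auto
  have wB: "w \<in> Bset e n i0 i1 i2" using a xs unfolding Wset_def Bset_def by auto
  from E show "xs \<in> ?A \<union> ?B \<union> ?C"
  proof (elim disjE)
    assume e: "e = S0"
    have "w@[S0] \<in> ?A" using wB e by simp
    then show ?thesis unfolding xs e by (rule UnI1[OF UnI1])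
  next
    assume e: "e = S1"
    have "w@[S1] \<in> ?B" using wB e by simp
    then show ?thesis unfolding xs e by (rule UnI1[OF UnI2])
  next
    assume e: "e = S2"
    have "w@[S2] \<in> ?C" using wB e by simp
    then show ?thesis unfolding xs e by (rule UnI2)
  qed
next
  fix xs assume a: "xs \<in> ?A \<union> ?B \<union> ?C"
  have hW: "w \<in> Bset e n i0 i1 i2 \<Longrightarrow> e \<in> {S0,S1,S2} \<Longrightarrow> w@[e] \<in> Wset (Suc n) i0 i1 i2" for w e
    unfolding Wset_def Bset_def by simp
  from a show "xs \<in> Wset (Suc n) i0 i1 i2"
  proof (elim UnE imageE)
    fix w assume "xs = w@[S0]" "w \<in> Bset S0 n i0 i1 i2"
    then show ?thesis using hW[of w S0] by simp
  next
    fix w assume "xs = w@[S1]" "w \<in> Bset S1 n i0 i1 i2"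
    then show ?thesis using hW[of w S1] by simp
  next
    fix w assume "xs = w@[S2]" "w \<in> Bset S2 n i0 i1 i2"
    then show ?thesis using hW[of w S2] by simp
  qed
qed

lemma cnt_snoc: "cnt s (w@[e]) = cnt s w + (if e = s then 1 else 0)" by simp

lemma Bset0: "Bset S0 n i0 i1 i2 = (if i0 = 0 then {} else Wset n (i0 - 1) i1 i2)"
proof (cases i0)
  case 0 then show ?thesis unfolding Bset_def by (simp add: cnt_snoc)
next
  case (Suc c) then show ?thesis unfolding Bset_def Wset_def by (simp add: cnt_snoc)
qed

lemma Bset1: "Bset S1 n i0 i1 i2 = (if i1 = 0 then {} else Wset n i0 (i1 - 1) i2)"
proof (cases i1)
  case 0 then show ?thesis unfolding Bset_def by (simp add: cnt_snoc)
next
  case (Suc c) then show ?thesis unfolding Bset_def Wset_def by (simp add: cnt_snoc)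
qed

lemma Bset2: "Bset S2 n i0 i1 i2 = (if i2 = 0 then {} else Wset n i0 i1 (i2 - 1))"
proof (cases i2)
  case 0 then show ?thesis unfolding Bset_def by (simp add: cnt_snoc)
next
  case (Suc c) then show ?thesis unfolding Bset_def Wset_def by (simp add: cnt_snoc)
qed

lemma sum_img: "sum (pr u1 u2 q) ((\<lambda>w. w@[e]) ` B) = (\<Sum>w\<in>B. pr u1 u2 q w * fac u1 u2 q w e)"
proof -
  have inj: "inj_on (\<lambda>w. w@[e]) B" by (simp add: inj_on_def)
  show ?thesis by (simp add: sum.reindex[OF inj] pr_snoc)
qed

lemma qfact_Suc: "qfact q (Suc k) = qfact q k * (1 - q ^ Suc k)"
  by (simp add: qfact_def qpoch_def mult.commute)

lemma qfact_0: "qfact q 0 = 1" by (simp add: qfact_def qpoch_def)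

lemma qfact_pos: assumes "0 < q" "q < 1" shows "qfact q k > 0"
proof (induction k)
  case 0 then show ?case by (simp add: qfact_0)
next
  case (Suc k)
  have "q ^ Suc k < 1" using assms by (rule power_Suc_less_one)
  then show ?case using Suc by (simp add: qfact_Suc)
qed

lemma qpoch_Suc: "qpoch x q (Suc k) = qpoch x q k * (1 - q ^ k * x)"
  by (simp add: qpoch_def)

definition RR :: "real \<Rightarrow> real \<Rightarrow> real \<Rightarrow> nat \<Rightarrow> nat \<Rightarrow> nat \<Rightarrow> real" where
  "RR u1 u2 q i0 i1 i2 = u1 ^ i1 * u2 ^ i2 * qpoch (u1 + u2) q i0 * qmultinom q i0 i1 i2"

lemma T0:
  assumes q: "0 < q" "q < 1" and N: "i0 + i1 + i2 = Suc m"
  shows "(if i0 = 0 then 0 else (1 - q ^ (i0 - 1) * (u1 + u2)) * RR u1 u2 q (i0 - 1) i1 i2)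
     = RR u1 u2 q i0 i1 i2 * (1 - q ^ i0) / (1 - q ^ Suc m)"
proof (cases i0)
  case 0 then show ?thesis by simp
next
  case (Suc a)
  define X where "X = u1 ^ i1 * u2 ^ i2"
  define y where "y = 1 - q ^ a * (u1 + u2)"
  define c where "c = 1 - q ^ Suc a"
  define d where "d = 1 - q ^ Suc m"
  define P where "P = qpoch (u1+u2) q a"
  have m: "a + i1 + i2 = m" using N Suc by simp
  have p: "q ^ Suc m < 1" "q ^ Suc a < 1" by (rule power_Suc_less_one[OF q])+
  then have cd: "c \<noteq> 0" "d \<noteq> 0" unfolding c_def d_def by auto
  have f: "qfact q a \<noteq> 0" "qfact q i1 \<noteq> 0" "qfact q i2 \<noteq> 0" "qfact q m \<noteq> 0"
    using qfact_pos[OF q] by (auto simp: less_le)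
  have e1: "qfact q (i0 + i1 + i2) = qfact q m * d" using N qfact_Suc d_def by simp
  have e2: "qfact q i0 = qfact q a * c" using Suc qfact_Suc c_def by simp
  have e3: "qpoch (u1+u2) q i0 = P * y" using Suc qpoch_Suc P_def y_def by simp
  have L: "(if i0 = 0 then 0 else (1 - q ^ (i0 - 1) * (u1 + u2)) * RR u1 u2 q (i0 - 1) i1 i2)
     = y * (X * P * (qfact q m / (qfact q a * qfact q i1 * qfact q i2)))"
    using Suc m by (simp add: RR_def qmultinom_def X_def y_def P_def)
  have R: "RR u1 u2 q i0 i1 i2 = X * (P * y) * (qfact q m * d / (qfact q a * c * qfact q i1 * qfact q i2))"
    unfolding RR_def qmultinom_def e1 e2 e3 X_def by simp
  have c': "1 - q ^ i0 = c" using Suc c_def by simp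
  show ?thesis unfolding L R c' d_def[symmetric] using cd f by (simp add: field_simps)
qed

lemma T1:
  assumes q: "0 < q" "q < 1" and N: "i0 + i1 + i2 = Suc m"
  shows "(if i1 = 0 then 0 else q ^ i0 * u1 * RR u1 u2 q i0 (i1 - 1) i2)
     = RR u1 u2 q i0 i1 i2 * (q ^ i0 * (1 - q ^ i1)) / (1 - q ^ Suc m)"
proof (cases i1)
  case 0 then show ?thesis by simp
next
  case (Suc a)
  define X where "X = u1 ^ a * u2 ^ i2"
  define c where "c = 1 - q ^ Suc a"
  define d where "d = 1 - q ^ Suc m"
  define P where "P = qpoch (u1+u2) q i0"
  have m: "i0 + a + i2 = m" using N Suc by simp
  have p: "q ^ Suc m < 1" "q ^ Suc a < 1" by (rule power_Suc_less_one[OF q])+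
  then have cd: "c \<noteq> 0" "d \<noteq> 0" unfolding c_def d_def by auto
  have f: "qfact q a \<noteq> 0" "qfact q i0 \<noteq> 0" "qfact q i2 \<noteq> 0" "qfact q m \<noteq> 0"
    using qfact_pos[OF q] by (auto simp: less_le)
  have e1: "qfact q (i0 + i1 + i2) = qfact q m * d" using N qfact_Suc d_def by simp
  have e2: "qfact q i1 = qfact q a * c" using Suc qfact_Suc c_def by simp
  have e4: "u1 ^ i1 = u1 * u1 ^ a" using Suc by simp
  have L: "(if i1 = 0 then 0 else q ^ i0 * u1 * RR u1 u2 q i0 (i1 - 1) i2)
     = q ^ i0 * u1 * (X * P * (qfact q m / (qfact q i0 * qfact q a * qfact q i2)))"
    using Suc m by (simp add: RR_def qmultinom_def X_def P_def mult.assoc)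
  have R: "RR u1 u2 q i0 i1 i2 = u1 * X * P * (qfact q m * d / (qfact q i0 * (qfact q a * c) * qfact q i2))"
    unfolding RR_def qmultinom_def e1 e2 e4 X_def P_def by (simp add: mult.assoc)
  have c': "1 - q ^ i1 = c" using Suc c_def by simp
  show ?thesis unfolding L R c' d_def[symmetric] using cd f by (simp add: field_simps)
qed

lemma T2:
  assumes q: "0 < q" "q < 1" and N: "i0 + i1 + i2 = Suc m"
  shows "(if i2 = 0 then 0 else q ^ (i0 + i1) * u2 * RR u1 u2 q i0 i1 (i2 - 1))
     = RR u1 u2 q i0 i1 i2 * (q ^ (i0 + i1) * (1 - q ^ i2)) / (1 - q ^ Suc m)"
proof (cases i2)
  case 0 then show ?thesis by simp
next
  case (Suc a)
  define X where "X = u1 ^ i1 * u2 ^ a"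
  define c where "c = 1 - q ^ Suc a"
  define d where "d = 1 - q ^ Suc m"
  define P where "P = qpoch (u1+u2) q i0"
  define Q where "Q = q ^ (i0 + i1)"
  have m: "i0 + i1 + a = m" using N Suc by simp
  have p: "q ^ Suc m < 1" "q ^ Suc a < 1" by (rule power_Suc_less_one[OF q])+
  then have cd: "c \<noteq> 0" "d \<noteq> 0" unfolding c_def d_def by auto
  have f: "qfact q a \<noteq> 0" "qfact q i0 \<noteq> 0" "qfact q i1 \<noteq> 0" "qfact q m \<noteq> 0"
    using qfact_pos[OF q] by (auto simp: less_le)
  have e1: "qfact q (i0 + i1 + i2) = qfact q m * d" using N qfact_Suc d_def by simp
  have e2: "qfact q i2 = qfact q a * c" using Suc qfact_Suc c_def by simp
  have e4: "u2 ^ i2 = u2 * u2 ^ a" using Suc by simp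
  have L: "(if i2 = 0 then 0 else q ^ (i0 + i1) * u2 * RR u1 u2 q i0 i1 (i2 - 1))
     = Q * u2 * (X * P * (qfact q m / (qfact q i0 * qfact q i1 * qfact q a)))"
    unfolding Suc using m by (simp add: RR_def qmultinom_def X_def P_def Q_def mult.assoc)
  have R: "RR u1 u2 q i0 i1 i2 = u2 * X * P * (qfact q m * d / (qfact q i0 * qfact q i1 * (qfact q a * c)))"
    unfolding RR_def qmultinom_def e1 e2 e4 X_def P_def by (simp add: mult_ac)
  have c': "1 - q ^ i2 = c" using Suc c_def by simp
  show ?thesis
    apply (unfold L R c' d_def[symmetric])
    apply (unfold Q_def[symmetric])
    using cd f apply (simp add: field_simps)
    done
qed

lemma aux: "(d::real) \<noteq> 0 \<Longrightarrow> a + b + c = d \<Longrightarrow> R*a/d + R*b/d + R*c/d = R"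
proof -
  assume "d \<noteq> 0" "a + b + c = d"
  have "R*a/d + R*b/d + R*c/d = R*(a+b+c)/d" by (simp add: add_divide_distrib distrib_left)
  then show ?thesis using \<open>d \<noteq> 0\<close> \<open>a + b + c = d\<close> by simp
qed

lemma recR:
  assumes q: "0 < q" "q < 1" and N: "i0 + i1 + i2 = Suc m"
  shows "(if i0 = 0 then 0 else (1 - q ^ (i0 - 1) * (u1 + u2)) * RR u1 u2 q (i0 - 1) i1 i2)
    + (if i1 = 0 then 0 else q ^ i0 * u1 * RR u1 u2 q i0 (i1 - 1) i2)
    + (if i2 = 0 then 0 else q ^ (i0 + i1) * u2 * RR u1 u2 q i0 i1 (i2 - 1))
    = RR u1 u2 q i0 i1 i2"
proof -
  have p: "q ^ Suc m < 1" by (rule power_Suc_less_one[OF q])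
  have qs: "q ^ Suc m = q ^ i0 * q ^ i1 * q ^ i2" using N by (metis power_add)
  have "(1 - q ^ i0) + q ^ i0 * (1 - q ^ i1) + q ^ (i0 + i1) * (1 - q ^ i2) = 1 - q ^ Suc m"
    unfolding qs power_add by (simp add: algebra_simps)
  then have "RR u1 u2 q i0 i1 i2 * (1 - q ^ i0) / (1 - q ^ Suc m)
    + RR u1 u2 q i0 i1 i2 * (q ^ i0 * (1 - q ^ i1)) / (1 - q ^ Suc m)
    + RR u1 u2 q i0 i1 i2 * (q ^ (i0 + i1) * (1 - q ^ i2)) / (1 - q ^ Suc m)
    = RR u1 u2 q i0 i1 i2"
    using p by (intro aux) auto
  then show ?thesis unfolding T0[OF q N] T1[OF q N] T2[OF q N] .
qed

lemma main:
  assumes q: "0 < q" "q < 1"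
  shows "i0 + i1 + i2 = n \<Longrightarrow> sum (pr u1 u2 q) (Wset n i0 i1 i2) = RR u1 u2 q i0 i1 i2"
proof (induction n arbitrary: i0 i1 i2)
  case 0
  then have z: "i0 = 0" "i1 = 0" "i2 = 0" by auto
  have "Wset 0 0 0 0 = {[]}" unfolding Wset_def by auto
  then show ?case unfolding z by (simp add: pr_def RR_def qmultinom_def qfact_0 qpoch_def)
next
  case (Suc m)
  let ?U = "u1 + u2"
  let ?f = "pr u1 u2 q"
  have fin: "finite (Bset e m i0 i1 i2)" if "e \<in> {S0,S1,S2}" for e
    using that by (auto simp: Bset0 Bset1 Bset2 Wset_finite)
  have s0: "sum ?f ((\<lambda>w. w@[S0]) ` Bset S0 m i0 i1 i2)
     = (if i0 = 0 then 0 else (1 - q ^ (i0 - 1) * ?U) * RR u1 u2 q (i0 - 1) i1 i2)"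
  proof (cases "i0 = 0")
    case True then show ?thesis by (simp add: Bset0)
  next
    case False
    have "sum ?f ((\<lambda>w. w@[S0]) ` Bset S0 m i0 i1 i2)
       = (\<Sum>w\<in>Wset m (i0 - 1) i1 i2. ?f w * (1 - q ^ (i0 - 1) * ?U))"
      unfolding sum_img Bset0 using False
      by (intro sum.cong) (auto simp: Wset_def fac_noStar[OF noStar])
    also have "\<dots> = (1 - q ^ (i0 - 1) * ?U) * RR u1 u2 q (i0 - 1) i1 i2"
      using Suc.IH[of "i0 - 1" i1 i2] Suc.prems False by (simp add: sum_distrib_right[symmetric])
    finally show ?thesis using False by simp
  qed
  have s1: "sum ?f ((\<lambda>w. w@[S1]) ` Bset S1 m i0 i1 i2)
     = (if i1 = 0 then 0 else q ^ i0 * u1 * RR u1 u2 q i0 (i1 - 1) i2)"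
  proof (cases "i1 = 0")
    case True then show ?thesis by (simp add: Bset1)
  next
    case False
    have "sum ?f ((\<lambda>w. w@[S1]) ` Bset S1 m i0 i1 i2)
       = (\<Sum>w\<in>Wset m i0 (i1 - 1) i2. ?f w * (q ^ i0 * u1))"
      unfolding sum_img Bset1 using False
      by (intro sum.cong) (auto simp: Wset_def fac_noStar[OF noStar])
    also have "\<dots> = q ^ i0 * u1 * RR u1 u2 q i0 (i1 - 1) i2"
      using Suc.IH[of i0 "i1 - 1" i2] Suc.prems False by (simp add: sum_distrib_right[symmetric])
    finally show ?thesis using False by simp
  qed
  have s2: "sum ?f ((\<lambda>w. w@[S2]) ` Bset S2 m i0 i1 i2)
     = (if i2 = 0 then 0 else q ^ (i0 + i1) * u2 * RR u1 u2 q i0 i1 (i2 - 1))"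
  proof (cases "i2 = 0")
    case True then show ?thesis by (simp add: Bset2)
  next
    case False
    have "sum ?f ((\<lambda>w. w@[S2]) ` Bset S2 m i0 i1 i2)
       = (\<Sum>w\<in>Wset m i0 i1 (i2 - 1). ?f w * (q ^ (i0 + i1) * u2))"
      unfolding sum_img Bset2 using False
      by (intro sum.cong) (auto simp: Wset_def fac_noStar[OF noStar])
    also have "\<dots> = q ^ (i0 + i1) * u2 * RR u1 u2 q i0 i1 (i2 - 1)"
      using Suc.IH[of i0 i1 "i2 - 1"] Suc.prems False by (simp add: sum_distrib_right[symmetric])
    finally show ?thesis using False by simp
  qed
  have d01: "(\<lambda>w. w@[S0]) ` Bset S0 m i0 i1 i2 \<inter> (\<lambda>w. w@[S1]) ` Bset S1 m i0 i1 i2 = {}" by auto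
  have d012: "((\<lambda>w. w@[S0]) ` Bset S0 m i0 i1 i2 \<union> (\<lambda>w. w@[S1]) ` Bset S1 m i0 i1 i2)
     \<inter> (\<lambda>w. w@[S2]) ` Bset S2 m i0 i1 i2 = {}" by auto
  have "sum ?f (Wset (Suc m) i0 i1 i2) = sum ?f ((\<lambda>w. w@[S0]) ` Bset S0 m i0 i1 i2)
     + sum ?f ((\<lambda>w. w@[S1]) ` Bset S1 m i0 i1 i2) + sum ?f ((\<lambda>w. w@[S2]) ` Bset S2 m i0 i1 i2)"
    unfolding Wset_Suc using fin d01 d012
    by (simp add: sum.union_disjoint)
  also have "\<dots> = RR u1 u2 q i0 i1 i2"
    unfolding s0 s1 s2 by (rule recR[OF q Suc.prems])
  finally show ?case .
qed

theorem theorem3p1: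
  fixes u1 u2 q :: real and n i0 i1 i2 :: nat
  assumes "u1 > 0" and "u2 > 0" and "u1 + u2 < 1"
    and "0 < q" and "q < 1"
    and "n \<ge> 1"
    and "i0 + i1 + i2 = n"
  shows "(\<Sum>\<omega>\<in>Aev n i0 i1 i2. pr u1 u2 q \<omega>)
           = u1 ^ i1 * u2 ^ i2 * qpoch (u1 + u2) q i0 * qmultinom q i0 i1 i2"
  using main[OF assms(4,5) assms(7)] Aev_eq[OF assms(7)] by (simp add: RR_def)

end
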